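(* Let $P$ be a poset with an $\mathbb{R}$-action $\Lambda$, and let $I$ be an interval of $P$. Then for every $\epsilon\ge0$: - $I\subseteq\mathrm{Ex}^\Lambda_\epsilon(I)$; - $\mathrm{Ex}^\Lambda_\epsilon(I)$ is an interval of $P$.
   Context: An interval of a poset $P$ is a nonempty subset $I$ that is convex ($p,q\in I$, $r\in P$, $p\le r\le q$ imply $r\in I$) and connected (any two elements of $I$ are joined by a finite sequence of elements of $I$ with consecutive ones comparable). For $A\subseteq P$ nonempty, $A^\uparrow=\{p\in P:\exists a\in A,\ a\le p\}$ and $A^\downarrow=\{p\in P:\exists a\in A,\ p\le a\}$; by convention $\emptyset^\uparrow=\emptyset^\downarrow=P$. An $\mathbb{R}$-action on $P$ is a family $\{\Lambda_\epsilon\}_{\epsilon\ge0}$ of poset automorphisms of $P$ such that: - $p\le\Lambda_\epsilon(p)$ for all $p$; - $\Lambda_0=\mathrm{id}$; - $\Lambda_\epsilon\circ\Lambda_\zeta=\Lambda_{\epsilon+\zeta}$. The $\Lambda_\epsilon$-thickening of $A\subseteq P$ is $\mathrm{Ex}^\Lambda_\epsilon(A)=\Lambda_\epsilon^{-1}(A)^\uparrow\cap\Lambda_\epsilon(A)^\downarrow$, where $\Lambda_\epsilon^{-1}(A)$ denotes the preimage. *)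

theory Defs
  imports Complex_Main
begin

definition convex_set :: "'a::order set \<Rightarrow> bool" where
  "convex_set I \<longleftrightarrow> (\<forall>p\<in>I. \<forall>q\<in>I. \<forall>r. p \<le> r \<and> r \<le> q \<longrightarrow> r \<in> I)"

definition comparable :: "'a::order \<Rightarrow> 'a \<Rightarrow> bool" where
  "comparable x y \<longleftrightarrow> x \<le> y \<or> y \<le> x"

definition connected_poset_set :: "'a::order set \<Rightarrow> bool" where
  "connected_poset_set I \<longleftrightarrow>
     (\<forall>p\<in>I. \<forall>q\<in>I. \<exists>xs. xs \<noteq> [] \<and> hd xs = p \<and> last xs = q \<and> set xs \<subseteq> I \<and>
        (\<forall>i. Suc i < length xs \<longrightarrow> comparable (xs ! i) (xs ! Suc i)))"

definition poset_interval :: "'a::order set \<Rightarrow> bool" where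
  "poset_interval I \<longleftrightarrow> I \<noteq> {} \<and> convex_set I \<and> connected_poset_set I"

definition up_closure :: "'a::order set \<Rightarrow> 'a set" where
  "up_closure A = (if A = {} then UNIV else {p. \<exists>a\<in>A. a \<le> p})"

definition down_closure :: "'a::order set \<Rightarrow> 'a set" where
  "down_closure A = (if A = {} then UNIV else {p. \<exists>a\<in>A. p \<le> a})"

definition poset_automorphism :: "('a::order \<Rightarrow> 'a) \<Rightarrow> bool" where
  "poset_automorphism f \<longleftrightarrow> bij f \<and> (\<forall>x y. x \<le> y \<longleftrightarrow> f x \<le> f y)"

text \<open>An R-action: Lambda eps is only relevant for eps >= 0.\<close>
definition R_action :: "(real \<Rightarrow> 'a::order \<Rightarrow> 'a) \<Rightarrow> bool" where
  "R_action \<Lambda> \<longleftrightarrow>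
     (\<forall>\<epsilon>\<ge>0. poset_automorphism (\<Lambda> \<epsilon>)) \<and>
     (\<forall>\<epsilon>\<ge>0. \<forall>p. p \<le> \<Lambda> \<epsilon> p) \<and>
     \<Lambda> 0 = id \<and>
     (\<forall>\<epsilon>\<ge>0. \<forall>\<zeta>\<ge>0. \<Lambda> \<epsilon> \<circ> \<Lambda> \<zeta> = \<Lambda> (\<epsilon> + \<zeta>))"

definition thickening :: "(real \<Rightarrow> 'a::order \<Rightarrow> 'a) \<Rightarrow> real \<Rightarrow> 'a set \<Rightarrow> 'a set" where
  "thickening \<Lambda> \<epsilon> A = up_closure (\<Lambda> \<epsilon> -` A) \<inter> down_closure (\<Lambda> \<epsilon> ` A)"

end

theory Submission
  imports Defs
begin

definition chn :: "'a::order set \<Rightarrow> 'a \<Rightarrow> 'a \<Rightarrow> bool" where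
  "chn S p q \<longleftrightarrow> (\<exists>xs. xs \<noteq> [] \<and> hd xs = p \<and> last xs = q \<and> set xs \<subseteq> S \<and>
        (\<forall>i. Suc i < length xs \<longrightarrow> comparable (xs ! i) (xs ! Suc i)))"

lemma chn_step: "p \<in> S \<Longrightarrow> q \<in> S \<Longrightarrow> comparable p q \<Longrightarrow> chn S p q"
  unfolding chn_def
  apply (rule exI[of _ "[p,q]"])
  apply (auto simp: less_Suc_eq)
  done

lemma chn_trans:
  assumes "chn S p q" "chn S q r" shows "chn S p r"
proof -
  obtain xs where x: "xs \<noteq> []" "hd xs = p" "last xs = q" "set xs \<subseteq> S"
    "\<forall>i. Suc i < length xs \<longrightarrow> comparable (xs ! i) (xs ! Suc i)"
    using assms(1) unfolding chn_def by blast
  obtain ys where y: "ys \<noteq> []" "hd ys = q" "last ys = r" "set ys \<subseteq> S"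
    "\<forall>i. Suc i < length ys \<longrightarrow> comparable (ys ! i) (ys ! Suc i)"
    using assms(2) unfolding chn_def by blast
  have "\<forall>i. Suc i < length (xs @ ys) \<longrightarrow> comparable ((xs@ys) ! i) ((xs@ys) ! Suc i)"
  proof (intro allI impI)
    fix i assume i: "Suc i < length (xs @ ys)"
    consider "Suc i < length xs" | "Suc i = length xs" | "Suc i > length xs" by linarith
    then show "comparable ((xs@ys) ! i) ((xs@ys) ! Suc i)"
    proof cases
      case 1 then show ?thesis using x(5) by (simp add: nth_append)
    next
      case 2
      have "(xs@ys) ! i = last xs" 
      proof -
        have "i = length xs - 1" using 2 by simp
        then show ?thesis using 2 x(1) by (simp add: nth_append last_conv_nth)
      qed
      moreover have "(xs@ys) ! Suc i = hd ys" using 2 y(1) by (simp add: nth_append hd_conv_nth)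
      ultimately show ?thesis using x(3) y(2) by (simp add: comparable_def)
    next
      case 3
      then obtain k where k: "i = length xs + k" by (metis less_Suc_eq_le le_Suc_ex)
      have "Suc k < length ys" using i k by simp
      then show ?thesis using y(5) k by (simp add: nth_append)
    qed
  qed
  then show ?thesis unfolding chn_def using x y
    by (intro exI[of _ "xs @ ys"]) auto
qed

lemma chn_sym:
  assumes "chn S p q" shows "chn S q p"
proof -
  obtain xs where x: "xs \<noteq> []" "hd xs = p" "last xs = q" "set xs \<subseteq> S"
    "\<forall>i. Suc i < length xs \<longrightarrow> comparable (xs ! i) (xs ! Suc i)"
    using assms(1) unfolding chn_def by blast
  have "\<forall>i. Suc i < length (rev xs) \<longrightarrow> comparable (rev xs ! i) (rev xs ! Suc i)"
  proof (intro allI impI)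
    fix i assume i: "Suc i < length (rev xs)"
    define j where "j = length xs - Suc (Suc i)"
    have "Suc j < length xs" using i j_def by simp
    then have "comparable (xs ! j) (xs ! Suc j)" using x(5) by blast
    moreover have "rev xs ! i = xs ! Suc j" using i j_def by (simp add: rev_nth Suc_diff_Suc)
    moreover have "rev xs ! Suc i = xs ! j" using i j_def by (simp add: rev_nth)
    ultimately show "comparable (rev xs ! i) (rev xs ! Suc i)" by (auto simp: comparable_def)
  qed
  then show ?thesis unfolding chn_def using x
    by (intro exI[of _ "rev xs"]) (auto simp: hd_rev last_rev)
qed

lemma chn_mono: "chn S p q \<Longrightarrow> S \<subseteq> T \<Longrightarrow> chn T p q"
  unfolding chn_def by blast

theorem proposition2p11:
  fixes \<Lambda> :: "real \<Rightarrow> 'a::order \<Rightarrow> 'a" and I :: "'a set" and \<epsilon> :: real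
  assumes "R_action \<Lambda>" and "poset_interval I" and "\<epsilon> \<ge> 0"
  shows "I \<subseteq> thickening \<Lambda> \<epsilon> I \<and> poset_interval (thickening \<Lambda> \<epsilon> I)"
proof -
  define L where "L = \<Lambda> \<epsilon>"
  have bij: "bij L" and mono: "\<And>x y. x \<le> y \<longleftrightarrow> L x \<le> L y" and ext: "\<And>p. p \<le> L p"
  proof -
    have A: "poset_automorphism L" and B: "\<forall>p. p \<le> L p"
      using assms(1,3) unfolding R_action_def L_def by blast+
    show "bij L" "\<And>x y. x \<le> y \<longleftrightarrow> L x \<le> L y" "\<And>p. p \<le> L p"
      using A B unfolding poset_automorphism_def by blast+
  qed
  have Ine: "I \<noteq> {}" and cv: "convex_set I" and cn: "connected_poset_set I"
    using assms(2) unfolding poset_interval_def by blast+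
  define T where "T = thickening \<Lambda> \<epsilon> I"
  have inv1: "L (inv L x) = x" for x using bij by (simp add: bij_is_surj surj_f_inv_f)
  have memT: "x \<in> T \<longleftrightarrow> (\<exists>a. L a \<in> I \<and> a \<le> x) \<and> (\<exists>b\<in>I. x \<le> L b)" for x
  proof -
    have "L -` I \<noteq> {}" using Ine inv1 by (metis all_not_in_conv vimageI2)
    then show ?thesis unfolding T_def thickening_def up_closure_def down_closure_def L_def[symmetric]
      using Ine by auto
  qed
  have sub: "I \<subseteq> T"
  proof
    fix x assume x: "x \<in> I"
    have "inv L x \<le> x" using ext[of "inv L x"] inv1 by simp
    moreover have "L (inv L x) \<in> I" using x inv1[of x] by simp
    ultimately show "x \<in> T" unfolding memT using x ext[of x] by blast
  qed
  have toI: "\<exists>c\<in>I. chn T x c" if xT: "x \<in> T" for x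
  proof -
    obtain a where a: "L a \<in> I" "a \<le> x" using xT unfolding memT by blast
    have "a \<le> L (L a)" using ext[of a] ext[of "L a"] by (rule order_trans)
    then have aT: "a \<in> T" using a(1) unfolding memT by blast
    have "chn T x a" using chn_step[OF xT aT] a by (simp add: comparable_def)
    moreover have "chn T a (L a)" using chn_step[OF aT, of "L a"] a(1) sub ext[of a] by (simp add: comparable_def subsetD)
    ultimately have "chn T x (L a)" by (rule chn_trans)
    then show ?thesis using a(1) by blast
  qed
  have inI: "chn I p q" if "p \<in> I" "q \<in> I" for p q
    using cn that unfolding connected_poset_set_def chn_def[symmetric] by blast
  have conn: "connected_poset_set T"
    unfolding connected_poset_set_def chn_def[symmetric]
  proof (intro ballI)
    fix p q assume p: "p \<in> T" and q: "q \<in> T"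
    obtain c where c: "c \<in> I" "chn T p c" using toI[OF p] by blast
    obtain d where d: "d \<in> I" "chn T q d" using toI[OF q] by blast
    have "chn T c d" using chn_mono[OF inI[OF c(1) d(1)] sub] .
    then have "chn T p d" by (rule chn_trans[OF c(2)])
    then show "chn T p q" using chn_sym[OF d(2)] by (rule chn_trans)
  qed
  have conv: "convex_set T"
    unfolding convex_set_def
  proof (intro ballI allI impI)
    fix p q r assume p: "p \<in> T" and q: "q \<in> T" and r: "p \<le> r \<and> r \<le> q"
    obtain a where a: "L a \<in> I" "a \<le> p" using p unfolding memT by blast
    obtain b where b: "b \<in> I" "q \<le> L b" using q unfolding memT by blast
    have ar: "a \<le> r" using a(2) r order.trans by blast
    have rb: "r \<le> L b" using b(2) r order.trans by blast
    show "r \<in> T" unfolding memT using a(1) b(1) ar rb by blast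
  qed
  have "T \<noteq> {}" using sub Ine by blast
  then show ?thesis using sub conn conv unfolding T_def poset_interval_def by blast
qed

end
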